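(* Let $\Sigma\in\mathbb{R}^{p\times p}$ be positive definite. Then $$\{B\in\mathbb{D}:\ \Sigma=(I-B)^{-T}\Omega(I-B)^{-1}\text{ for some }\Omega\in\mathcal{D}^+\}=\{\tilde B(\pi):\ \pi\text{ a permutation of }[p]\}.$$
   Context: $\mathbb{D}$ is the set of real $p\times p$ matrices whose directed graph (edge $i\to j$ iff $b_{ij}\ne0$) is acyclic. $\mathcal{D}^+$ is the set of $p\times p$ diagonal matrices with positive diagonal entries. For a permutation $\pi$ of $[p]$ and a $p\times p$ matrix $A$, $(P_\pi A)_{ij}=a_{\pi(i)\pi(j)}$. For each $\pi$, write uniquely $P_\pi\Sigma^{-1}=(I-L)D^{-1}(I-L)^T$ with $L$ strictly lower triangular and $D\in\mathcal{D}^+$, and set $\tilde B(\pi)=P_{\pi^{-1}}L$. *)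

theory Defs
  imports "HOL-Analysis.Analysis"
begin

(* p x p real matrices, indices ranging over a finite linearly ordered type 'n
  (playing the role of [p] with its usual order). *)

definition pos_def_mat :: "real^'n^'n \<Rightarrow> bool" where
  "pos_def_mat S \<longleftrightarrow> transpose S = S \<and> (\<forall>x. x \<noteq> 0 \<longrightarrow> x \<bullet> (S *v x) > 0)"

definition dag_mat :: "real^'n^'n \<Rightarrow> bool" where
  "dag_mat B \<longleftrightarrow> acyclic {(i, j). B $ i $ j \<noteq> 0}"

definition pos_diag :: "real^'n^'n \<Rightarrow> bool" where
  "pos_diag D \<longleftrightarrow> (\<forall>i j. i \<noteq> j \<longrightarrow> D $ i $ j = 0) \<and> (\<forall>i. D $ i $ i > 0)"

definition strictly_lower :: "real^('n::{finite,linorder})^('n::{finite,linorder}) \<Rightarrow> bool" where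
  "strictly_lower L \<longleftrightarrow> (\<forall>i j. i \<le> j \<longrightarrow> L $ i $ j = 0)"

definition perm_mat_act :: "('n \<Rightarrow> 'n) \<Rightarrow> real^'n^'n \<Rightarrow> real^'n^'n" where
  "perm_mat_act \<pi> A = (\<chi> i j. A $ \<pi> i $ \<pi> j)"

definition Btilde :: "real^('n::{finite,linorder})^('n::{finite,linorder}) \<Rightarrow> ('n \<Rightarrow> 'n) \<Rightarrow> real^('n::{finite,linorder})^('n::{finite,linorder})" where
  "Btilde S \<pi> = perm_mat_act (inv \<pi>)
     (THE L. \<exists>D. strictly_lower L \<and> pos_diag D \<and>
        perm_mat_act \<pi> (matrix_inv S) =
          (mat 1 - L) ** matrix_inv D ** transpose (mat 1 - L))"

end

theory Submission
  imports Defs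
begin

lemma fin_less_induct:
  fixes P :: "'n::{finite,linorder} \<Rightarrow> bool"
  assumes step: "\<And>i. (\<And>k. k < i \<Longrightarrow> P k) \<Longrightarrow> P i"
  shows "P i"
proof (induction "card {k. k < i}" arbitrary: i rule: less_induct)
  case less
  show ?case
  proof (rule step)
    fix k assume "k < i"
    have "{m. m < k} \<subset> {m. m < i}" using \<open>k < i\<close> by auto
    then have "card {m. m < k} < card {m. m < i}" by (simp add: psubset_card_mono)
    then show "P k" using less by blast
  qed
qed

lemma sum_single:
  fixes f :: "'n::finite \<Rightarrow> 'a::comm_monoid_add"
  assumes "\<And>k. k \<noteq> i \<Longrightarrow> f k = 0"
  shows "sum f UNIV = f i"
proof -
  have "sum f UNIV = sum (\<lambda>k. if k = i then f i else 0) UNIV"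
    by (rule sum.cong) (auto simp: assms)
  then show ?thesis by simp
qed

definition lowerm :: "real^('n::{finite,linorder})^('n::{finite,linorder}) \<Rightarrow> bool" where
  "lowerm M \<longleftrightarrow> (\<forall>i j. i < j \<longrightarrow> M $ i $ j = 0)"

definition unitl :: "real^('n::{finite,linorder})^('n::{finite,linorder}) \<Rightarrow> bool" where
  "unitl M \<longleftrightarrow> lowerm M \<and> (\<forall>i. M $ i $ i = 1)"

lemma lowerm_mult:
  fixes A B :: "real^('n::{finite,linorder})^('n::{finite,linorder})"
  assumes "lowerm A" "lowerm B"
  shows "lowerm (A ** B)"
  unfolding lowerm_def
proof (intro allI impI)
  fix i j :: 'n assume ij: "i < j"
  have "(A ** B) $ i $ j = (\<Sum>k\<in>UNIV. A $ i $ k * B $ k $ j)"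
    by (simp add: matrix_matrix_mult_def)
  also have "\<dots> = 0"
  proof (rule sum.neutral, intro ballI)
    fix k
    show "A $ i $ k * B $ k $ j = 0"
    proof (cases "i < k")
      case True then show ?thesis using assms(1) by (simp add: lowerm_def)
    next
      case False then have "k < j" using ij by auto
      then show ?thesis using assms(2) by (simp add: lowerm_def)
    qed
  qed
  finally show "(A ** B) $ i $ j = 0" .
qed

lemma lowerm_diag:
  assumes "lowerm A" "lowerm B"
  shows "(A ** B) $ i $ i = A $ i $ i * B $ i $ i"
proof -
  have "(A ** B) $ i $ i = (\<Sum>k\<in>UNIV. A $ i $ k * B $ k $ i)"
    by (simp add: matrix_matrix_mult_def)
  also have "\<dots> = A $ i $ i * B $ i $ i"
  proof (rule sum_single)
    fix k assume "k \<noteq> i"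
    then have "i < k \<or> k < i" by auto
    then show "A $ i $ k * B $ k $ i = 0" using assms by (auto simp: lowerm_def)
  qed
  finally show ?thesis .
qed

lemma unitl_mult: "unitl A \<Longrightarrow> unitl B \<Longrightarrow> unitl (A ** B)"
  unfolding unitl_def using lowerm_mult[of A B] lowerm_diag[of A B] by simp

lemma inv_eq:
  fixes A B :: "real^'n^'n"
  assumes "A ** B = mat 1"
  shows "matrix_inv A = B"
proof -
  have BA: "B ** A = mat 1" using assms matrix_left_right_inverse by blast
  have ex: "\<exists>A'. A ** A' = mat 1 \<and> A' ** A = mat 1" using assms BA by blast
  define A' where "A' = matrix_inv A"
  have A': "A ** A' = mat 1 \<and> A' ** A = mat 1"
    unfolding A'_def matrix_inv_def by (rule someI_ex[OF ex])
  have "A' = A' ** (A ** B)" using assms by simp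
  also have "\<dots> = (A' ** A) ** B" by (simp add: matrix_mul_assoc)
  also have "\<dots> = B" using A' by simp
  finally show ?thesis unfolding A'_def .
qed

lemma inv_props:
  fixes A :: "real^'n^'n"
  assumes "invertible A"
  shows "A ** matrix_inv A = mat 1" "matrix_inv A ** A = mat 1"
proof -
  obtain B where "A ** B = mat 1" using assms invertible_def by blast
  then have "matrix_inv A = B" by (rule inv_eq)
  then show "A ** matrix_inv A = mat 1" "matrix_inv A ** A = mat 1"
    using \<open>A ** B = mat 1\<close> matrix_left_right_inverse by auto
qed

lemma inv_inv:
  fixes A :: "real^'n^'n"
  assumes "invertible A"
  shows "matrix_inv (matrix_inv A) = A"
  by (rule inv_eq) (use inv_props[OF assms] in simp)

lemma inj_invertible:
  fixes A :: "real^'n^'n"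
  assumes "inj ((*v) A)"
  shows "invertible A"
proof -
  have "linear ((*v) A)" by simp
  then have "surj ((*v) A)" using assms linear_injective_imp_surjective by blast
  then show ?thesis using matrix_right_invertible_surjective invertible_right_inverse by blast
qed

lemma unitl_inj:
  assumes "unitl M"
  shows "inj ((*v) M)"
proof -
  have "x = 0" if "M *v x = 0" for x
  proof -
    have "x $ i = 0" for i
    proof (induction i rule: fin_less_induct)
      case (1 i)
      have "0 = (M *v x) $ i" using that by simp
      also have "\<dots> = (\<Sum>k\<in>UNIV. M $ i $ k * x $ k)" by (simp add: matrix_vector_mult_def)
      also have "\<dots> = M $ i $ i * x $ i"
      proof (rule sum_single)
        fix k assume "k \<noteq> i"
        then have "i < k \<or> k < i" by auto
        then show "M $ i $ k * x $ k = 0" using assms 1 by (auto simp: unitl_def lowerm_def)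
      qed
      finally show ?case using assms by (simp add: unitl_def)
    qed
    then show ?thesis by (simp add: vec_eq_iff)
  qed
  then show ?thesis
    by (metis (no_types, lifting) diff_zero inj_on_def matrix_vector_mult_diff_distrib eq_iff_diff_eq_0)
qed

lemma unitl_inv:
  fixes M N :: "real^('n::{finite,linorder})^('n::{finite,linorder})"
  assumes M: "unitl M" and MN: "M ** N = mat 1"
  shows "unitl N"
proof -
  have Ml: "\<And>i k. i < k \<Longrightarrow> M $ i $ k = 0" and Md: "\<And>i. M $ i $ i = 1"
    using M by (auto simp: unitl_def lowerm_def)
  have MNij: "(\<Sum>k\<in>UNIV. M $ i $ k * N $ k $ j) = (if i = j then 1 else 0)" for i j
  proof -
    have "(M ** N) $ i $ j = mat 1 $ i $ j" using MN by simp
    then show ?thesis by (simp add: matrix_matrix_mult_def mat_def)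
  qed
  have up: "\<forall>j. i < j \<longrightarrow> N $ i $ j = 0" for i
  proof (induction i rule: fin_less_induct)
    case (1 i)
    show ?case
    proof (intro allI impI)
      fix j assume ij: "i < j"
      have "0 = (\<Sum>k\<in>UNIV. M $ i $ k * N $ k $ j)" using MNij[of i j] ij by simp
      also have "\<dots> = M $ i $ i * N $ i $ j"
      proof (rule sum_single)
        fix k assume "k \<noteq> i"
        then consider "i < k" | "k < i" by fastforce
        then show "M $ i $ k * N $ k $ j = 0"
        proof cases
          case 1 then show ?thesis using Ml by simp
        next
          case 2 then have "N $ k $ j = 0" using "1.IH"[of k] ij by simp
          then show ?thesis by simp
        qed
      qed
      finally show "N $ i $ j = 0" using Md by simp
    qed
  qed
  have dg: "N $ i $ i = 1" for i
  proof -
    have "1 = (\<Sum>k\<in>UNIV. M $ i $ k * N $ k $ i)" using MNij[of i i] by simp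
    also have "\<dots> = M $ i $ i * N $ i $ i"
    proof (rule sum_single)
      fix k assume "k \<noteq> i"
      then consider "i < k" | "k < i" by fastforce
      then show "M $ i $ k * N $ k $ i = 0"
      proof cases
        case 1 then show ?thesis using Ml by simp
      next
        case 2 then have "N $ k $ i = 0" using up[of k] by simp
        then show ?thesis by simp
      qed
    qed
    finally show ?thesis using Md by simp
  qed
  show ?thesis using up dg unfolding unitl_def lowerm_def by blast
qed

lemma unitl_invertible: "unitl M \<Longrightarrow> invertible M"
  using unitl_inj inj_invertible by blast

lemma bij_sum_reindex:
  fixes g :: "'n::finite \<Rightarrow> real"
  assumes "bij \<pi>"
  shows "(\<Sum>k\<in>UNIV. g (\<pi> k)) = (\<Sum>k\<in>UNIV. g k)"
  using sum.reindex_bij_betw[of \<pi> UNIV UNIV g] assms by (simp add: bij_def bij_betw_def)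

lemma pm_mult:
  assumes "bij \<pi>"
  shows "perm_mat_act \<pi> (A ** B) = perm_mat_act \<pi> A ** perm_mat_act \<pi> B"
proof -
  have "(\<Sum>k\<in>UNIV. A $ \<pi> i $ k * B $ k $ \<pi> j) = (\<Sum>k\<in>UNIV. A $ \<pi> i $ \<pi> k * B $ \<pi> k $ \<pi> j)" for i j
    using bij_sum_reindex[OF assms, of "\<lambda>k. A $ \<pi> i $ k * B $ k $ \<pi> j"] by simp
  then show ?thesis
    by (simp add: vec_eq_iff perm_mat_act_def matrix_matrix_mult_def)
qed

lemma pm_mat1:
  assumes "bij \<pi>"
  shows "perm_mat_act \<pi> (mat 1) = mat 1"
  using assms by (simp add: vec_eq_iff perm_mat_act_def mat_def bij_is_inj inj_eq)

lemma pm_diff: "perm_mat_act \<pi> (A - B) = perm_mat_act \<pi> A - perm_mat_act \<pi> B"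
  by (simp add: vec_eq_iff perm_mat_act_def)

lemma pm_transpose: "perm_mat_act \<pi> (transpose A) = transpose (perm_mat_act \<pi> A)"
  by (simp add: vec_eq_iff perm_mat_act_def transpose_def)

lemma pm_cancel1:
  assumes "\<pi> permutes UNIV"
  shows "perm_mat_act (inv \<pi>) (perm_mat_act \<pi> A) = A"
  using permutes_inverses[OF assms] by (simp add: vec_eq_iff perm_mat_act_def)

lemma pm_cancel2:
  assumes "\<pi> permutes UNIV"
  shows "perm_mat_act \<pi> (perm_mat_act (inv \<pi>) A) = A"
  using permutes_inverses[OF assms] by (simp add: vec_eq_iff perm_mat_act_def)

lemma pm_matrix_inv:
  fixes A :: "real^'n::finite^'n"
  assumes "bij \<pi>" "invertible A"
  shows "perm_mat_act \<pi> (matrix_inv A) = matrix_inv (perm_mat_act \<pi> A)"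
proof -
  have "perm_mat_act \<pi> A ** perm_mat_act \<pi> (matrix_inv A) = mat 1"
    using pm_mult[OF assms(1), of A "matrix_inv A"] inv_props[OF assms(2)] pm_mat1[OF assms(1)] by simp
  then show ?thesis using inv_eq by metis
qed

lemma pm_invertible:
  fixes A :: "real^'n::finite^'n"
  assumes "bij \<pi>" "invertible A"
  shows "invertible (perm_mat_act \<pi> A)"
proof -
  have "perm_mat_act \<pi> A ** perm_mat_act \<pi> (matrix_inv A) = mat 1"
    using pm_mult[OF assms(1), of A "matrix_inv A"] inv_props[OF assms(2)] pm_mat1[OF assms(1)] by simp
  then show ?thesis using invertible_right_inverse by blast
qed

lemma pm_pos_diag:
  assumes "bij \<pi>" "pos_diag D"
  shows "pos_diag (perm_mat_act \<pi> D)"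
  using assms by (simp add: pos_diag_def perm_mat_act_def bij_is_inj inj_eq)

lemma pm_pos_def:
  fixes S :: "real^'n::finite^'n"
  assumes \<pi>: "\<pi> permutes UNIV" and S: "pos_def_mat S"
  shows "pos_def_mat (perm_mat_act \<pi> S)"
  unfolding pos_def_mat_def
proof (intro conjI allI impI)
  have b: "bij \<pi>" using \<pi> permutes_bij by blast
  show "transpose (perm_mat_act \<pi> S) = perm_mat_act \<pi> S"
    using S by (simp add: pos_def_mat_def pm_transpose[symmetric])
  fix x :: "real^'n" assume x: "x \<noteq> 0"
  define y where "y = (\<chi> a. x $ inv \<pi> a)"
  have xy: "x $ i = y $ \<pi> i" for i
    using permutes_inverses[OF \<pi>] by (simp add: y_def)
  have "y \<noteq> 0"
  proof
    assume "y = 0"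
    then have "x $ i = 0" for i using xy by simp
    then show False using x by (simp add: vec_eq_iff)
  qed
  then have pos: "y \<bullet> (S *v y) > 0" using S by (simp add: pos_def_mat_def)
  have inner1: "(\<Sum>j\<in>UNIV. S $ \<pi> i $ \<pi> j * y $ \<pi> j) = (\<Sum>j\<in>UNIV. S $ \<pi> i $ j * y $ j)" for i
    using bij_sum_reindex[OF b, of "\<lambda>j. S $ \<pi> i $ j * y $ j"] by simp
  have "x \<bullet> (perm_mat_act \<pi> S *v x) = (\<Sum>i\<in>UNIV. y $ \<pi> i * (\<Sum>j\<in>UNIV. S $ \<pi> i $ \<pi> j * y $ \<pi> j))"
    by (simp add: inner_vec_def matrix_vector_mult_def perm_mat_act_def xy)
  also have "\<dots> = (\<Sum>i\<in>UNIV. y $ \<pi> i * (\<Sum>j\<in>UNIV. S $ \<pi> i $ j * y $ j))"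
    using inner1 by simp
  also have "\<dots> = (\<Sum>i\<in>UNIV. y $ i * (\<Sum>j\<in>UNIV. S $ i $ j * y $ j))"
    using bij_sum_reindex[OF b, of "\<lambda>i. y $ i * (\<Sum>j\<in>UNIV. S $ i $ j * y $ j)"] by simp
  also have "\<dots> = y \<bullet> (S *v y)"
    by (simp add: inner_vec_def matrix_vector_mult_def)
  finally show "x \<bullet> (perm_mat_act \<pi> S *v x) > 0" using pos by simp
qed

lemma posdef_invertible:
  fixes S :: "real^'n::finite^'n"
  assumes S: "pos_def_mat S"
  shows "invertible S"
proof (rule inj_invertible)
  have "x = 0" if "S *v x = 0" for x
    using S that unfolding pos_def_mat_def by (metis inner_zero_right less_irrefl)
  then show "inj ((*v) S)"
    by (metis (no_types, lifting) inj_on_def matrix_vector_mult_diff_distrib eq_iff_diff_eq_0)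
qed

lemma posdef_inv:
  fixes S :: "real^'n::finite^'n"
  assumes S: "pos_def_mat S"
  shows "pos_def_mat (matrix_inv S)"
  unfolding pos_def_mat_def
proof (intro conjI allI impI)
  have iv: "invertible S" using posdef_invertible[OF S] .
  have St: "transpose S = S" using S by (simp add: pos_def_mat_def)
  have "S ** transpose (matrix_inv S) = mat 1"
    using matrix_transpose_mul[of "matrix_inv S" S] inv_props(2)[OF iv] St by (metis transpose_mat)
  then have "matrix_inv S = transpose (matrix_inv S)" by (rule inv_eq)
  then show "transpose (matrix_inv S) = matrix_inv S" by simp
  fix x :: "real^'n" assume x: "x \<noteq> 0"
  define y where "y = matrix_inv S *v x"
  have Sy: "S *v y = x" using inv_props(1)[OF iv] by (simp add: y_def matrix_vector_mul_assoc)
  have "y \<noteq> 0" using Sy x by auto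
  then have "y \<bullet> (S *v y) > 0" using S by (simp add: pos_def_mat_def)
  moreover have "x \<bullet> (matrix_inv S *v x) = y \<bullet> (S *v y)"
  proof -
    have "(S *v y) \<bullet> y = x \<bullet> y" using Sy by simp
    then have "(S *v y) \<bullet> y = x \<bullet> (matrix_inv S *v x)" unfolding y_def .
    then have "x \<bullet> (matrix_inv S *v x) = (S *v y) \<bullet> y" by simp
    also have "\<dots> = (y v* S) \<bullet> y" using St by (metis transpose_matrix_vector)
    also have "\<dots> = y \<bullet> (S *v y)" by (rule dot_lmul_matrix)
    finally show ?thesis .
  qed
  ultimately show "x \<bullet> (matrix_inv S *v x) > 0" by simp
qed

definition dinv :: "real^'n::finite^'n \<Rightarrow> real^'n^'n" where
  "dinv D = (\<chi> i j. if i = j then 1 / D $ i $ i else 0)"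

lemma diag_right:
  assumes "\<And>i j. i \<noteq> j \<Longrightarrow> G $ i $ j = 0"
  shows "(X ** G) $ i $ j = X $ i $ j * G $ j $ j"
proof -
  have "(X ** G) $ i $ j = (\<Sum>k\<in>UNIV. X $ i $ k * G $ k $ j)" by (simp add: matrix_matrix_mult_def)
  also have "\<dots> = X $ i $ j * G $ j $ j" by (rule sum_single) (simp add: assms)
  finally show ?thesis .
qed

lemma pos_diag_inv:
  fixes D :: "real^'n::finite^'n"
  assumes D: "pos_diag D"
  shows "matrix_inv D = dinv D" "pos_diag (matrix_inv D)" "invertible D"
proof -
  have "(D ** dinv D) $ i $ j = (if i = j then 1 else 0)" for i j
  proof -
    have "(D ** dinv D) $ i $ j = (\<Sum>k\<in>UNIV. D $ i $ k * dinv D $ k $ j)" by (simp add: matrix_matrix_mult_def)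
    also have "\<dots> = D $ i $ i * dinv D $ i $ j" by (rule sum_single) (use D in \<open>simp add: pos_diag_def\<close>)
    also have "\<dots> = (if i = j then 1 else 0)" using D by (simp add: dinv_def pos_diag_def less_imp_neq[symmetric])
    finally show ?thesis .
  qed
  then have DD: "D ** dinv D = mat 1" by (simp add: vec_eq_iff mat_def)
  then show "matrix_inv D = dinv D" by (rule inv_eq)
  show "pos_diag (matrix_inv D)" using D \<open>matrix_inv D = dinv D\<close> by (simp add: pos_diag_def dinv_def)
  show "invertible D" using DD invertible_right_inverse by blast
qed

lemma diag_left:
  assumes "\<And>i j. i \<noteq> j \<Longrightarrow> G $ i $ j = 0"
  shows "(G ** X) $ i $ j = G $ i $ i * X $ i $ j"
proof -
  have "(G ** X) $ i $ j = (\<Sum>k\<in>UNIV. G $ i $ k * X $ k $ j)" by (simp add: matrix_matrix_mult_def)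
  also have "\<dots> = G $ i $ i * X $ i $ j" by (rule sum_single) (simp add: assms)
  finally show ?thesis .
qed

lemma mat1_entry: "(mat 1 :: real^'n^'n) $ i $ j = (if i = j then 1 else 0)"
  by (simp add: mat_def)

lemma sl_unitl:
  fixes L :: "real^('n::{finite,linorder})^('n::{finite,linorder})"
  assumes "strictly_lower L"
  shows "unitl (mat 1 - L)"
  using assms unfolding unitl_def lowerm_def strictly_lower_def
  by (auto simp: mat1_entry)

lemma unitl_sl:
  fixes W :: "real^('n::{finite,linorder})^('n::{finite,linorder})"
  assumes "unitl W"
  shows "strictly_lower (mat 1 - W)"
  unfolding strictly_lower_def
proof (intro allI impI)
  fix i j :: 'n assume "i \<le> j"
  then consider "i = j" | "i < j" by fastforce
  then show "(mat 1 - W) $ i $ j = 0"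
    using assms by cases (auto simp: mat1_entry unitl_def lowerm_def)
qed

lemma entry_XAY:
  fixes X A Y :: "real^'n::finite^'n"
  shows "(X ** A ** transpose Y) $ i $ k = (X $ i) \<bullet> (A *v (Y $ k))"
proof -
  have "(X ** A ** transpose Y) $ i $ k = (\<Sum>l\<in>UNIV. (\<Sum>m\<in>UNIV. X $ i $ m * A $ m $ l) * Y $ k $ l)"
    by (simp add: matrix_matrix_mult_def transpose_def)
  also have "\<dots> = (\<Sum>l\<in>UNIV. \<Sum>m\<in>UNIV. X $ i $ m * (A $ m $ l * Y $ k $ l))"
    by (simp add: sum_distrib_right mult.assoc)
  also have "\<dots> = (\<Sum>m\<in>UNIV. \<Sum>l\<in>UNIV. X $ i $ m * (A $ m $ l * Y $ k $ l))"
    by (rule sum.swap)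
  also have "\<dots> = (\<Sum>m\<in>UNIV. X $ i $ m * (\<Sum>l\<in>UNIV. A $ m $ l * Y $ k $ l))"
    by (simp add: sum_distrib_left)
  also have "\<dots> = (X $ i) \<bullet> (A *v (Y $ k))"
    by (simp add: inner_vec_def matrix_vector_mult_def)
  finally show ?thesis .
qed

lemma sym_inner:
  fixes A :: "real^'n::finite^'n"
  assumes "transpose A = A"
  shows "x \<bullet> (A *v y) = y \<bullet> (A *v x)"
proof -
  have "x \<bullet> (A *v y) = (x v* A) \<bullet> y" by (rule dot_lmul_matrix[symmetric])
  also have "\<dots> = (transpose A *v x) \<bullet> y" by simp
  also have "\<dots> = y \<bullet> (A *v x)" using assms by (simp add: inner_commute)
  finally show ?thesis .
qed

lemma vec_exists:
  fixes A :: "real^('n::{finite,linorder})^('n::{finite,linorder})"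
  assumes A: "pos_def_mat A"
  shows "\<exists>v. v $ i = 1 \<and> (\<forall>j. i < j \<longrightarrow> v $ j = 0) \<and> (\<forall>j. j < i \<longrightarrow> (A *v v) $ j = 0)"
proof -
  define M where
    "M = (\<chi> j k. if j < i then (if k < i then A $ j $ k else 0) else (if j = k then 1 else 0))"
  have Mx1: "(M *v x) $ j = x $ j" if "\<not> j < i" for x j
  proof -
    have "(M *v x) $ j = (\<Sum>k\<in>UNIV. M $ j $ k * x $ k)" by (simp add: matrix_vector_mult_def)
    also have "\<dots> = M $ j $ j * x $ j" by (rule sum_single) (use that in \<open>simp add: M_def\<close>)
    finally show ?thesis using that by (simp add: M_def)
  qed
  have Mx2: "(M *v x) $ j = (A *v x) $ j" if "j < i" "\<And>k. \<not> k < i \<Longrightarrow> x $ k = 0" for x j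
  proof -
    have "(M *v x) $ j = (\<Sum>k\<in>UNIV. M $ j $ k * x $ k)" by (simp add: matrix_vector_mult_def)
    also have "\<dots> = (\<Sum>k\<in>UNIV. A $ j $ k * x $ k)"
      by (rule sum.cong) (use that in \<open>auto simp: M_def\<close>)
    finally show ?thesis by (simp add: matrix_vector_mult_def)
  qed
  have inj0: "x = 0" if "M *v x = 0" for x
  proof -
    have x0: "x $ k = 0" if "\<not> k < i" for k using Mx1[OF that, of x] \<open>M *v x = 0\<close> by simp
    have Ax0: "(A *v x) $ j = 0" if "j < i" for j using Mx2[OF that x0] \<open>M *v x = 0\<close> by simp
    have "x \<bullet> (A *v x) = (\<Sum>j\<in>UNIV. x $ j * (A *v x) $ j)" by (simp add: inner_vec_def)
    also have "\<dots> = 0"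
      by (rule sum.neutral) (metis Ax0 x0 mult_zero_left mult_zero_right)
    finally show ?thesis using A unfolding pos_def_mat_def by (metis less_irrefl)
  qed
  have "inj ((*v) M)"
    unfolding inj_on_def using inj0
    by (metis (no_types, lifting) matrix_vector_mult_diff_distrib eq_iff_diff_eq_0)
  then have Minv: "invertible M" by (rule inj_invertible)
  define e where "e = axis i (1::real)"
  define b where "b = (\<chi> j. if j < i then (A *v e) $ j else 0)"
  define x where "x = matrix_inv M *v b"
  have Mxb: "M *v x = b" using inv_props(1)[OF Minv] by (simp add: x_def matrix_vector_mul_assoc)
  have x0: "x $ k = 0" if "\<not> k < i" for k using Mx1[OF that, of x] Mxb that by (simp add: b_def)
  have Ax: "(A *v x) $ j = (A *v e) $ j" if "j < i" for j using Mx2[OF that x0] Mxb that by (simp add: b_def)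
  define v where "v = e - x"
  have "v $ i = 1" using x0[of i] by (simp add: v_def e_def)
  moreover have "v $ j = 0" if "i < j" for j
    using x0[of j] that by (simp add: v_def e_def axis_def)
  moreover have "(A *v v) $ j = 0" if "j < i" for j
    using Ax[OF that] by (simp add: v_def matrix_vector_mult_diff_distrib)
  ultimately show ?thesis by blast
qed

lemma ldl_exists:
  fixes A :: "real^('n::{finite,linorder})^('n::{finite,linorder})"
  assumes A: "pos_def_mat A"
  shows "\<exists>L D. strictly_lower L \<and> pos_diag D \<and> A = (mat 1 - L) ** matrix_inv D ** transpose (mat 1 - L)"
proof -
  obtain vf where vf: "\<And>i. vf i $ i = 1 \<and> (\<forall>j. i < j \<longrightarrow> vf i $ j = 0) \<and> (\<forall>j. j < i \<longrightarrow> (A *v vf i) $ j = 0)"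
    using vec_exists[OF A] by metis
  define V where "V = (\<chi> i. vf i)"
  have Vrow: "V $ i = vf i" for i by (simp add: V_def)
  have uV: "unitl V" using vf by (simp add: unitl_def lowerm_def Vrow)
  have At: "transpose A = A" using A by (simp add: pos_def_mat_def)
  define G where "G = V ** A ** transpose V"
  have Gik: "G $ i $ k = vf i \<bullet> (A *v vf k)" for i k by (simp add: G_def entry_XAY Vrow)
  have off: "G $ i $ k = 0" if "i \<noteq> k" for i k
  proof -
    have zero: "vf a \<bullet> (A *v vf c) = 0" if "a < c" for a c
    proof -
      have "vf a \<bullet> (A *v vf c) = (\<Sum>j\<in>UNIV. vf a $ j * (A *v vf c) $ j)" by (simp add: inner_vec_def)
      also have "\<dots> = 0"
      proof (rule sum.neutral, intro ballI)
        fix j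
        show "vf a $ j * (A *v vf c) $ j = 0"
        proof (cases "a < j")
          case True then show ?thesis using vf by simp
        next
          case False then have "j < c" using that by auto
          then show ?thesis using vf by simp
        qed
      qed
      finally show ?thesis .
    qed
    consider "i < k" | "k < i" using \<open>i \<noteq> k\<close> neq_iff by blast
    then show ?thesis
    proof cases
      case 1 then show ?thesis using zero Gik by simp
    next
      case 2 then show ?thesis using zero[OF 2] Gik sym_inner[OF At, of "vf i" "vf k"] by simp
    qed
  qed
  have dpos: "G $ i $ i > 0" for i
  proof -
    have "vf i \<noteq> 0" using vf[of i] by auto
    then show ?thesis using A Gik by (simp add: pos_def_mat_def)
  qed
  have pG: "pos_diag G" using off dpos by (simp add: pos_diag_def)
  have iV: "invertible V" using unitl_invertible[OF uV] .
  define W where "W = matrix_inv V"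
  have VW: "V ** W = mat 1" and WV: "W ** V = mat 1" using inv_props[OF iV] by (simp_all add: W_def)
  have uW: "unitl W" using unitl_inv[OF uV VW] .
  have "W ** G ** transpose W = (W ** V) ** A ** (transpose V ** transpose W)"
    by (simp add: G_def matrix_mul_assoc)
  also have "\<dots> = A" using WV by (simp add: matrix_transpose_mul[symmetric])
  finally have AW: "A = W ** G ** transpose W" by simp
  define L where "L = mat 1 - W"
  have sL: "strictly_lower L" using unitl_sl[OF uW] by (simp add: L_def)
  define D where "D = matrix_inv G"
  have pD: "pos_diag D" using pos_diag_inv(2)[OF pG] by (simp add: D_def)
  have "matrix_inv D = G" using inv_inv[OF pos_diag_inv(3)[OF pG]] by (simp add: D_def)
  then have "A = (mat 1 - L) ** matrix_inv D ** transpose (mat 1 - L)" using AW by (simp add: L_def)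
  then show ?thesis using sL pD by blast
qed

lemma ldl_unique:
  fixes L1 L2 D1 D2 :: "real^('n::{finite,linorder})^('n::{finite,linorder})"
  assumes sL1: "strictly_lower L1" and sL2: "strictly_lower L2"
    and pD1: "pos_diag D1" and pD2: "pos_diag D2"
    and eq: "(mat 1 - L1) ** matrix_inv D1 ** transpose (mat 1 - L1) =
             (mat 1 - L2) ** matrix_inv D2 ** transpose (mat 1 - L2)"
  shows "L1 = L2"
proof -
  define W1 where "W1 = mat 1 - L1"
  define W2 where "W2 = mat 1 - L2"
  define G1 where "G1 = matrix_inv D1"
  define G2 where "G2 = matrix_inv D2"
  have uW1: "unitl W1" using sl_unitl[OF sL1] by (simp add: W1_def)
  have uW2: "unitl W2" using sl_unitl[OF sL2] by (simp add: W2_def)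
  have pG1: "pos_diag G1" using pos_diag_inv(2)[OF pD1] by (simp add: G1_def)
  have pG2: "pos_diag G2" using pos_diag_inv(2)[OF pD2] by (simp add: G2_def)
  have eq': "W1 ** G1 ** transpose W1 = W2 ** G2 ** transpose W2"
    using eq by (simp add: W1_def W2_def G1_def G2_def)
  have iW2: "invertible W2" using unitl_invertible[OF uW2] .
  define N2 where "N2 = matrix_inv W2"
  have WN: "W2 ** N2 = mat 1" and NW: "N2 ** W2 = mat 1" using inv_props[OF iW2] by (simp_all add: N2_def)
  have uN2: "unitl N2" using unitl_inv[OF uW2 WN] .
  define M where "M = N2 ** W1"
  have uM: "unitl M" using unitl_mult[OF uN2 uW1] by (simp add: M_def)
  have "M ** G1 ** transpose M = N2 ** (W1 ** G1 ** transpose W1) ** transpose N2"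
    by (simp add: M_def matrix_transpose_mul matrix_mul_assoc)
  also have "\<dots> = (N2 ** W2) ** G2 ** (transpose W2 ** transpose N2)"
    by (simp add: eq' matrix_mul_assoc)
  also have "\<dots> = G2" using NW by (simp add: matrix_transpose_mul[symmetric])
  finally have MGM: "M ** G1 ** transpose M = G2" .
  have iM: "invertible M" using unitl_invertible[OF uM] .
  define K where "K = matrix_inv M"
  have MK: "M ** K = mat 1" and KM: "K ** M = mat 1" using inv_props[OF iM] by (simp_all add: K_def)
  have uK: "unitl K" using unitl_inv[OF uM MK] .
  have "M ** G1 = M ** G1 ** (transpose M ** transpose K)"
    using KM by (simp add: matrix_transpose_mul[symmetric])
  also have "\<dots> = G2 ** transpose K" using MGM by (simp add: matrix_mul_assoc)
  finally have MG: "M ** G1 = G2 ** transpose K" .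
  have offG1: "\<And>i j. i \<noteq> j \<Longrightarrow> G1 $ i $ j = 0" using pG1 by (simp add: pos_diag_def)
  have offG2: "\<And>i j. i \<noteq> j \<Longrightarrow> G2 $ i $ j = 0" using pG2 by (simp add: pos_diag_def)
  have Mlow: "M $ i $ j = 0" if "j < i" for i j
  proof -
    have "(M ** G1) $ i $ j = (G2 ** transpose K) $ i $ j" using MG by simp
    then have "M $ i $ j * G1 $ j $ j = G2 $ i $ i * K $ j $ i"
      by (simp add: diag_right[OF offG1] diag_left[OF offG2] transpose_def)
    also have "K $ j $ i = 0" using uK that by (simp add: unitl_def lowerm_def)
    finally have "M $ i $ j * G1 $ j $ j = 0" by simp
    moreover have "G1 $ j $ j \<noteq> 0" using pG1 unfolding pos_diag_def by (metis less_irrefl)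
    ultimately show ?thesis by simp
  qed
  have "M = mat 1"
  proof -
    have "M $ i $ j = mat 1 $ i $ j" for i j
    proof -
      consider "i = j" | "i < j" | "j < i" by fastforce
      then show ?thesis using uM Mlow by cases (auto simp: mat1_entry unitl_def lowerm_def)
    qed
    then show ?thesis by (simp add: vec_eq_iff)
  qed
  then have "W1 = W2"
    by (metis M_def WN matrix_mul_assoc matrix_mul_lid matrix_mul_rid)
  then show ?thesis by (simp add: W1_def W2_def)
qed

lemma rank_props:
  fixes lt :: "'a::finite \<Rightarrow> 'a \<Rightarrow> bool"
  assumes irr: "\<And>a. \<not> lt a a" and tr: "\<And>a b c. lt a b \<Longrightarrow> lt b c \<Longrightarrow> lt a c"
    and tot: "\<And>a b. a \<noteq> b \<Longrightarrow> lt a b \<or> lt b a"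
  shows "\<And>a b. lt a b \<Longrightarrow> card {c. lt c a} < card {c. lt c b}"
    and "bij_betw (\<lambda>a. card {c. lt c a}) UNIV {..<CARD('a)}"
proof -
  show mono: "card {c. lt c a} < card {c. lt c b}" if "lt a b" for a b
  proof -
    have "{c. lt c a} \<subset> {c. lt c b}" using that tr irr by blast
    then show ?thesis by (simp add: psubset_card_mono)
  qed
  define r where "r = (\<lambda>a. card {c. lt c a})"
  have inj: "inj r"
  proof (rule injI)
    fix a b assume "r a = r b"
    show "a = b"
    proof (rule ccontr)
      assume "a \<noteq> b"
      then have "lt a b \<or> lt b a" by (rule tot)
      then show False using mono[of a b] mono[of b a] \<open>r a = r b\<close> unfolding r_def by auto
    qed
  qed
  have sub: "r ` UNIV \<subseteq> {..<CARD('a)}"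
  proof
    fix y assume "y \<in> r ` UNIV"
    then obtain a where ya: "y = r a" by blast
    have "{c. lt c a} \<subset> UNIV" using irr by blast
    then have "card {c. lt c a} < CARD('a)" by (simp add: psubset_card_mono)
    then show "y \<in> {..<CARD('a)}" by (simp add: ya r_def)
  qed
  have "card (r ` UNIV) = CARD('a)" using inj by (simp add: card_image)
  then have "r ` UNIV = {..<CARD('a)}" using sub by (simp add: card_subset_eq)
  then show "bij_betw (\<lambda>a. card {c. lt c a}) UNIV {..<CARD('a)}"
    using inj unfolding r_def bij_betw_def by simp
qed

lemma hdec_lemma:
  fixes R :: "('n::finite \<times> 'n) set"
  assumes acy: "acyclic R" and that: "(a, b) \<in> R"
  shows "card {x. (b, x) \<in> R\<^sup>+} < card {x. (a, x) \<in> R\<^sup>+}"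
proof -
    have s1: "{x. (b, x) \<in> R\<^sup>+} \<subseteq> {x. (a, x) \<in> R\<^sup>+}"
    proof
      fix x assume "x \<in> {x. (b, x) \<in> R\<^sup>+}"
      then have "(b, x) \<in> R\<^sup>+" by simp
      then have "(a, x) \<in> R\<^sup>+" using trancl_into_trancl2[OF that] by simp
      then show "x \<in> {x. (a, x) \<in> R\<^sup>+}" by simp
    qed
    have s2: "b \<in> {x. (a, x) \<in> R\<^sup>+}" using that by (simp add: r_into_trancl')
    have s3: "b \<notin> {x. (b, x) \<in> R\<^sup>+}" using acy by (simp add: acyclic_def)
    have "{x. (b, x) \<in> R\<^sup>+} \<subset> {x. (a, x) \<in> R\<^sup>+}" using s1 s2 s3 by blast
    then show ?thesis by (simp add: psubset_card_mono)
qed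

lemma lex_props:
  fixes h :: "'n::{finite,linorder} \<Rightarrow> nat"
  defines "lt1 \<equiv> (\<lambda>a b. h a < h b \<or> (h a = h b \<and> a < b))"
  shows "\<And>a. \<not> lt1 a a" "\<And>a b c. lt1 a b \<Longrightarrow> lt1 b c \<Longrightarrow> lt1 a c"
    "\<And>a b. a \<noteq> b \<Longrightarrow> lt1 a b \<or> lt1 b a"
  unfolding lt1_def by auto

lemma lin_props:
  shows "\<And>a::'n::linorder. \<not> a < a" "\<And>a b c::'n. a < b \<Longrightarrow> b < c \<Longrightarrow> a < c"
    "\<And>a b::'n. a \<noteq> b \<Longrightarrow> a < b \<or> b < a"
  by auto

lemma topo:
  fixes B :: "real^('n::{finite,linorder})^('n::{finite,linorder})"
  assumes "dag_mat B"
  shows "\<exists>\<pi>. \<pi> permutes UNIV \<and> strictly_lower (perm_mat_act \<pi> B)"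
proof -
  define R where "R = {(i, j). B $ i $ j \<noteq> 0}"
  have acy: "acyclic R" using assms by (simp add: dag_mat_def R_def)
  define h where "h = (\<lambda>a. card {x. (a, x) \<in> R\<^sup>+})"
  have hdec: "h b < h a" if "(a, b) \<in> R" for a b
    unfolding h_def using hdec_lemma[OF acy that] .
  define lt1 where "lt1 = (\<lambda>a b. h a < h b \<or> (h a = h b \<and> a < (b::'n)))"
  have lp1: "\<And>a. \<not> lt1 a a" unfolding lt1_def by (rule lex_props(1))
  have lp2: "\<And>a b c. lt1 a b \<Longrightarrow> lt1 b c \<Longrightarrow> lt1 a c" unfolding lt1_def by (rule lex_props(2))
  have lp3: "\<And>a b. a \<noteq> b \<Longrightarrow> lt1 a b \<or> lt1 b a" unfolding lt1_def by (rule lex_props(3))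
  note lp = lp1 lp2 lp3
  have r1: "\<And>a b. lt1 a b \<Longrightarrow> card {c. lt1 c a} < card {c. lt1 c b}"
    by (rule rank_props(1)[OF lp])
  define r1f where "r1f = (\<lambda>a. card {c. lt1 c a})"
  have r1bij: "bij_betw r1f UNIV {..<CARD('n)}"
    unfolding r1f_def by (rule rank_props(2)[OF lp])
  have r0: "\<And>a b. a < b \<Longrightarrow> card {c. c < a} < card {c. c < (b::'n)}"
    by (rule rank_props(1)[OF lin_props])
  define r0f where "r0f = (\<lambda>a::'n. card {c. c < a})"
  have r0bij: "bij_betw r0f UNIV {..<CARD('n)}"
    unfolding r0f_def by (rule rank_props(2)[OF lin_props])
  define \<sigma> where "\<sigma> = (\<lambda>a. inv_into UNIV r0f (r1f a))"
  have r0\<sigma>: "r0f (\<sigma> a) = r1f a" for a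
  proof -
    have "r1f a \<in> {..<CARD('n)}" using r1bij by (auto simp: bij_betw_def)
    then have "r1f a \<in> r0f ` UNIV" using r0bij by (simp add: bij_betw_def)
    then show ?thesis unfolding \<sigma>_def by (simp add: f_inv_into_f)
  qed
  have \<sigma>mono: "\<sigma> b < \<sigma> a" if "lt1 b a" for a b
  proof (rule ccontr)
    assume "\<not> \<sigma> b < \<sigma> a"
    then have "\<sigma> a \<le> \<sigma> b" by simp
    have "r0f (\<sigma> a) \<le> r0f (\<sigma> b)"
    proof (cases "\<sigma> a = \<sigma> b")
      case True then show ?thesis by simp
    next
      case False then have "\<sigma> a < \<sigma> b" using \<open>\<sigma> a \<le> \<sigma> b\<close> by simp
      then show ?thesis using r0[of "\<sigma> a" "\<sigma> b"] unfolding r0f_def by simp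
    qed
    then have "r1f a \<le> r1f b" using r0\<sigma> by simp
    moreover have "r1f b < r1f a" using r1[OF that] by (simp add: r1f_def)
    ultimately show False by simp
  qed
  have inj\<sigma>: "inj \<sigma>"
  proof (rule injI)
    fix a b assume "\<sigma> a = \<sigma> b"
    then have "r1f a = r1f b" using r0\<sigma>[of a] r0\<sigma>[of b] by simp
    then show "a = b" using r1bij by (simp add: bij_betw_def inj_eq)
  qed
  have "surj \<sigma>" using finite_UNIV_inj_surj[OF _ inj\<sigma>] by simp
  then have bij\<sigma>: "bij \<sigma>" using inj\<sigma> by (simp add: bij_def)
  define \<pi> where "\<pi> = inv \<sigma>"
  have bij\<pi>: "bij \<pi>" using bij\<sigma> by (simp add: \<pi>_def bij_imp_bij_inv)
  then have perm: "\<pi> permutes UNIV" by (rule bij_imp_permutes) simp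
  have \<sigma>\<pi>: "\<sigma> (\<pi> i) = i" for i using bij\<sigma> by (simp add: \<pi>_def bij_is_surj surj_f_inv_f)
  have "strictly_lower (perm_mat_act \<pi> B)"
    unfolding strictly_lower_def
  proof (intro allI impI)
    fix i j :: 'n assume ij: "i \<le> j"
    show "perm_mat_act \<pi> B $ i $ j = 0"
    proof (rule ccontr)
      assume "perm_mat_act \<pi> B $ i $ j \<noteq> 0"
      then have "(\<pi> i, \<pi> j) \<in> R" by (simp add: perm_mat_act_def R_def)
      then have "lt1 (\<pi> j) (\<pi> i)" using hdec by (simp add: lt1_def)
      then have "\<sigma> (\<pi> j) < \<sigma> (\<pi> i)" by (rule \<sigma>mono)
      then show False using ij \<sigma>\<pi> by simp
    qed
  qed
  then show ?thesis using perm by blast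
qed

lemma inv_rel:
  fixes S W \<Omega> :: "real^'n::finite^'n"
  assumes iS: "invertible S" and iW: "invertible W" and iO: "invertible \<Omega>"
  shows "S = transpose (matrix_inv W) ** \<Omega> ** matrix_inv W \<longleftrightarrow>
         matrix_inv S = W ** matrix_inv \<Omega> ** transpose W"
proof -
  define Y where "Y = matrix_inv W"
  define Oi where "Oi = matrix_inv \<Omega>"
  have WY: "W ** Y = mat 1" and YW: "Y ** W = mat 1" using inv_props[OF iW] by (simp_all add: Y_def)
  have OO: "\<Omega> ** Oi = mat 1" using inv_props[OF iO] by (simp add: Oi_def)
  define P where "P = transpose Y ** \<Omega> ** Y"
  define Q where "Q = W ** Oi ** transpose W"
  have "P ** Q = transpose Y ** (\<Omega> ** ((Y ** W) ** (Oi ** transpose W)))"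
    by (simp add: P_def Q_def matrix_mul_assoc)
  also have "\<dots> = transpose Y ** ((\<Omega> ** Oi) ** transpose W)" using YW by (simp add: matrix_mul_assoc)
  also have "\<dots> = transpose (W ** Y)" using OO by (simp add: matrix_transpose_mul)
  also have "\<dots> = mat 1" using WY by simp
  finally have PQ: "P ** Q = mat 1" .
  then have QP: "Q ** P = mat 1" using matrix_left_right_inverse by blast
  show ?thesis
  proof
    assume "S = transpose (matrix_inv W) ** \<Omega> ** matrix_inv W"
    then have "S = P" by (simp add: P_def Y_def)
    then show "matrix_inv S = W ** matrix_inv \<Omega> ** transpose W"
      using inv_eq[OF PQ] by (simp add: Q_def Oi_def)
  next
    assume "matrix_inv S = W ** matrix_inv \<Omega> ** transpose W"
    then have "matrix_inv S = Q" by (simp add: Q_def Oi_def)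
    then have "S = matrix_inv Q" using inv_inv[OF iS] by simp
    also have "\<dots> = P" using inv_eq[OF QP] .
    finally show "S = transpose (matrix_inv W) ** \<Omega> ** matrix_inv W" by (simp add: P_def Y_def)
  qed
qed

lemma acyclic_rank:
  fixes f :: "'a \<Rightarrow> 'b::linorder"
  assumes "R \<subseteq> {(i, j). f j < f i}"
  shows "acyclic R"
proof -
  have "f b < f a" if "(a, b) \<in> R\<^sup>+" for a b
    using that
  proof (induction rule: trancl_induct)
    case (base y) then show ?case using assms by blast
  next
    case (step y z)
    then have "f z < f y" using assms by blast
    then show ?case using step.IH by simp
  qed
  then show ?thesis unfolding acyclic_def by blast
qed

lemma pm_triple:
  assumes "bij \<pi>"
  shows "perm_mat_act \<pi> (X ** Y ** transpose X) = perm_mat_act \<pi> X ** perm_mat_act \<pi> Y ** transpose (perm_mat_act \<pi> X)"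
  using assms by (simp add: pm_mult pm_transpose)

theorem lemma1:
  fixes \<Sigma> :: "real^('n::{finite,linorder})^('n::{finite,linorder})"
  assumes "pos_def_mat \<Sigma>"
  shows "{B. dag_mat B \<and> (\<exists>\<Omega>. pos_diag \<Omega> \<and>
             \<Sigma> = transpose (matrix_inv (mat 1 - B)) ** \<Omega> ** matrix_inv (mat 1 - B))}
         = {Btilde \<Sigma> \<pi> | \<pi>. \<pi> permutes (UNIV :: 'n set)}"
proof -
  have iS: "invertible \<Sigma>" using posdef_invertible[OF assms] .
  have pSi: "pos_def_mat (matrix_inv \<Sigma>)" using posdef_inv[OF assms] .
  show ?thesis
  proof (intro equalityI subsetI)
    fix B assume "B \<in> {B. dag_mat B \<and> (\<exists>\<Omega>. pos_diag \<Omega> \<and>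
             \<Sigma> = transpose (matrix_inv (mat 1 - B)) ** \<Omega> ** matrix_inv (mat 1 - B))}"
    then obtain \<Omega> where dB: "dag_mat B" and pO: "pos_diag \<Omega>"
      and Seq: "\<Sigma> = transpose (matrix_inv (mat 1 - B)) ** \<Omega> ** matrix_inv (mat 1 - B)"
      by blast
    obtain \<pi> where perm: "\<pi> permutes UNIV" and sL: "strictly_lower (perm_mat_act \<pi> B)"
      using topo[OF dB] by blast
    define L where "L = perm_mat_act \<pi> B"
    have b\<pi>: "bij \<pi>" using permutes_bij[OF perm] .
    have bi\<pi>: "bij (inv \<pi>)" using permutes_bij[OF permutes_inv[OF perm]] .
    have PW: "perm_mat_act \<pi> (mat 1 - B) = mat 1 - L"
      by (simp add: L_def pm_diff pm_mat1[OF b\<pi>])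
    have "invertible (mat 1 - L)" using unitl_invertible[OF sl_unitl] sL by (simp add: L_def)
    then have "invertible (perm_mat_act (inv \<pi>) (perm_mat_act \<pi> (mat 1 - B)))"
      using pm_invertible[OF bi\<pi>] PW by simp
    then have iW: "invertible (mat 1 - B)" using pm_cancel1[OF perm] by simp
    have iO: "invertible \<Omega>" using pos_diag_inv(3)[OF pO] .
    have Si: "matrix_inv \<Sigma> = (mat 1 - B) ** matrix_inv \<Omega> ** transpose (mat 1 - B)"
      using inv_rel[OF iS iW iO] Seq by simp
    define D where "D = perm_mat_act \<pi> \<Omega>"
    have pD: "pos_diag D" using pm_pos_diag[OF b\<pi> pO] by (simp add: D_def)
    have key: "perm_mat_act \<pi> (matrix_inv \<Sigma>) = (mat 1 - L) ** matrix_inv D ** transpose (mat 1 - L)"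
      using Si pm_triple[OF b\<pi>] PW pm_matrix_inv[OF b\<pi> iO] by (simp add: D_def)
    have "(THE L'. \<exists>D. strictly_lower L' \<and> pos_diag D \<and>
        perm_mat_act \<pi> (matrix_inv \<Sigma>) = (mat 1 - L') ** matrix_inv D ** transpose (mat 1 - L')) = L"
    proof (rule the_equality)
      show "\<exists>D. strictly_lower L \<and> pos_diag D \<and>
        perm_mat_act \<pi> (matrix_inv \<Sigma>) = (mat 1 - L) ** matrix_inv D ** transpose (mat 1 - L)"
        using sL pD key by (auto simp: L_def)
    next
      fix L' assume "\<exists>D. strictly_lower L' \<and> pos_diag D \<and>
        perm_mat_act \<pi> (matrix_inv \<Sigma>) = (mat 1 - L') ** matrix_inv D ** transpose (mat 1 - L')"
      then obtain D' where sL': "strictly_lower L'" and pD': "pos_diag D'"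
        and e': "perm_mat_act \<pi> (matrix_inv \<Sigma>) = (mat 1 - L') ** matrix_inv D' ** transpose (mat 1 - L')"
        by blast
      show "L' = L" using ldl_unique[OF sL' _ pD' pD] sL e' key by (simp add: L_def)
    qed
    then have "Btilde \<Sigma> \<pi> = perm_mat_act (inv \<pi>) L" by (simp add: Btilde_def)
    also have "\<dots> = B" using pm_cancel1[OF perm] by (simp add: L_def)
    finally show "B \<in> {Btilde \<Sigma> \<pi> | \<pi>. \<pi> permutes (UNIV :: 'n set)}" using perm by blast
  next
    fix B assume "B \<in> {Btilde \<Sigma> \<pi> | \<pi>. \<pi> permutes (UNIV :: 'n set)}"
    then obtain \<pi> where perm: "\<pi> permutes UNIV" and Bd: "B = Btilde \<Sigma> \<pi>" by blast
    have b\<pi>: "bij \<pi>" using permutes_bij[OF perm] .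
    have bi\<pi>: "bij (inv \<pi>)" using permutes_bij[OF permutes_inv[OF perm]] .
    define A where "A = perm_mat_act \<pi> (matrix_inv \<Sigma>)"
    have pA: "pos_def_mat A" using pm_pos_def[OF perm pSi] by (simp add: A_def)
    obtain L0 D0 where sL0: "strictly_lower L0" and pD0: "pos_diag D0"
      and A0: "A = (mat 1 - L0) ** matrix_inv D0 ** transpose (mat 1 - L0)"
      using ldl_exists[OF pA] by blast
    have "(THE L'. \<exists>D. strictly_lower L' \<and> pos_diag D \<and>
        perm_mat_act \<pi> (matrix_inv \<Sigma>) = (mat 1 - L') ** matrix_inv D ** transpose (mat 1 - L')) = L0"
    proof (rule the_equality)
      show "\<exists>D. strictly_lower L0 \<and> pos_diag D \<and>
        perm_mat_act \<pi> (matrix_inv \<Sigma>) = (mat 1 - L0) ** matrix_inv D ** transpose (mat 1 - L0)"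
        using sL0 pD0 A0 by (auto simp: A_def)
    next
      fix L' assume "\<exists>D. strictly_lower L' \<and> pos_diag D \<and>
        perm_mat_act \<pi> (matrix_inv \<Sigma>) = (mat 1 - L') ** matrix_inv D ** transpose (mat 1 - L')"
      then obtain D' where sL': "strictly_lower L'" and pD': "pos_diag D'"
        and e': "perm_mat_act \<pi> (matrix_inv \<Sigma>) = (mat 1 - L') ** matrix_inv D' ** transpose (mat 1 - L')"
        by blast
      show "L' = L0" using ldl_unique[OF sL' sL0 pD' pD0] e' A0 by (simp add: A_def)
    qed
    then have BL: "B = perm_mat_act (inv \<pi>) L0" using Bd by (simp add: Btilde_def)
    have dB: "dag_mat B"
      unfolding dag_mat_def
    proof (rule acyclic_rank[where f = "inv \<pi>"])
      show "{(i, j). B $ i $ j \<noteq> 0} \<subseteq> {(i, j). inv \<pi> j < inv \<pi> i}"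
      proof
        fix x assume "x \<in> {(i, j). B $ i $ j \<noteq> 0}"
        then obtain i j where x: "x = (i, j)" and nz: "L0 $ inv \<pi> i $ inv \<pi> j \<noteq> 0"
          by (auto simp: BL perm_mat_act_def)
        have "\<not> inv \<pi> i \<le> inv \<pi> j" using sL0 nz by (auto simp: strictly_lower_def)
        then show "x \<in> {(i, j). inv \<pi> j < inv \<pi> i}" using x by simp
      qed
    qed
    define \<Omega> where "\<Omega> = perm_mat_act (inv \<pi>) D0"
    have pO: "pos_diag \<Omega>" using pm_pos_diag[OF bi\<pi> pD0] by (simp add: \<Omega>_def)
    have iO: "invertible \<Omega>" using pos_diag_inv(3)[OF pO] .
    have iD0: "invertible D0" using pos_diag_inv(3)[OF pD0] .
    have PW: "perm_mat_act (inv \<pi>) (mat 1 - L0) = mat 1 - B"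
      by (simp add: BL pm_diff pm_mat1[OF bi\<pi>])
    have iW: "invertible (mat 1 - B)"
      using pm_invertible[OF bi\<pi> unitl_invertible[OF sl_unitl[OF sL0]]] PW by simp
    have "matrix_inv \<Sigma> = perm_mat_act (inv \<pi>) A" using pm_cancel1[OF perm] by (simp add: A_def)
    also have "\<dots> = (mat 1 - B) ** matrix_inv \<Omega> ** transpose (mat 1 - B)"
      using A0 pm_triple[OF bi\<pi>] PW pm_matrix_inv[OF bi\<pi> iD0] by (simp add: \<Omega>_def)
    finally have "\<Sigma> = transpose (matrix_inv (mat 1 - B)) ** \<Omega> ** matrix_inv (mat 1 - B)"
      using inv_rel[OF iS iW iO] by simp
    then show "B \<in> {B. dag_mat B \<and> (\<exists>\<Omega>. pos_diag \<Omega> \<and>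
             \<Sigma> = transpose (matrix_inv (mat 1 - B)) ** \<Omega> ** matrix_inv (mat 1 - B))}"
      using dB pO by blast
  qed
qed

end
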